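(* Let $q\in\mathrm{prob}(\{0,1\}^2)$. The set $C_\le:=\{(\pi_1,\chi^{(2)}_{1|1}-\chi^{(1)}_{1|1}):(\pi,\chi)\in\Theta_2,\ \mu(\pi,\chi)=q,\ \chi^{(1)}_{0|0}\le\chi^{(2)}_{0|0}\}$ is nonempty and equals the set of all $(\mathrm{Pr},\Delta\mathrm{Se})\in[0,1]\times[-1,1]$ satisfying $q_{01}-q_{10}\le\mathrm{Pr}\,\Delta\mathrm{Se}\le\min\{q_{01},\ q_{01}-q_{10}+1-\mathrm{Pr}\}$.
   Context: $\mathrm{prob}(\mathcal{X})$ is the set of probability densities on a finite set $\mathcal{X}$; $\mathrm{markov}(\mathcal{X},\mathcal{Y})$ the set of maps $(x,y)\mapsto p_{y|x}$ with $p_{\cdot|x}\in\mathrm{prob}(\mathcal{Y})$. $\Theta_2:=\mathrm{prob}(\{0,1\})\times\mathrm{markov}(\{0,1\},\{0,1\}^2)$, $\mu(\pi,\chi)_j:=\sum_{i=0}^1\pi_i\chi_{j|i}$ for $j\in\{0,1\}^2$, $\chi^{(1)}_{\iota|i}:=\chi_{\iota0|i}+\chi_{\iota1|i}$, $\chi^{(2)}_{\iota|i}:=\chi_{0\iota|i}+\chi_{1\iota|i}$. *)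

theory Defs
  imports Complex_Main
begin

text \<open>The two-element set {0,1} is represented by bool (0 = False, 1 = True);
  {0,1}^2 by bool \<times> bool, where the string j1 j2 corresponds to the pair (j1, j2).\<close>

definition prob_dens :: "('a::finite \<Rightarrow> real) set" where
  "prob_dens = {p. (\<forall>x. 0 \<le> p x) \<and> (\<Sum>x\<in>UNIV. p x) = 1}"

text \<open>A Markov kernel: k x y is p_{y|x}.\<close>
definition markov :: "('a::finite \<Rightarrow> 'b::finite \<Rightarrow> real) set" where
  "markov = {k. \<forall>x. k x \<in> prob_dens}"

definition Theta2 :: "((bool \<Rightarrow> real) \<times> (bool \<Rightarrow> bool \<times> bool \<Rightarrow> real)) set" where
  "Theta2 = prob_dens \<times> markov"

definition mu :: "(bool \<Rightarrow> real) \<Rightarrow> (bool \<Rightarrow> bool \<times> bool \<Rightarrow> real) \<Rightarrow> bool \<times> bool \<Rightarrow> real" where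
  "mu \<pi> \<chi> j = (\<Sum>i\<in>UNIV. \<pi> i * \<chi> i j)"

text \<open>chi1 \<chi> i \<iota> = \<chi>^{(1)}_{\<iota>|i}, chi2 \<chi> i \<iota> = \<chi>^{(2)}_{\<iota>|i}.\<close>
definition chi1 :: "(bool \<Rightarrow> bool \<times> bool \<Rightarrow> real) \<Rightarrow> bool \<Rightarrow> bool \<Rightarrow> real" where
  "chi1 \<chi> i \<iota> = \<chi> i (\<iota>, False) + \<chi> i (\<iota>, True)"

definition chi2 :: "(bool \<Rightarrow> bool \<times> bool \<Rightarrow> real) \<Rightarrow> bool \<Rightarrow> bool \<Rightarrow> real" where
  "chi2 \<chi> i \<iota> = \<chi> i (False, \<iota>) + \<chi> i (True, \<iota>)"

definition C_le :: "(bool \<times> bool \<Rightarrow> real) \<Rightarrow> (real \<times> real) set" where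
  "C_le q = {(\<pi> True, chi2 \<chi> True True - chi1 \<chi> True True) | \<pi> \<chi>.
              (\<pi>, \<chi>) \<in> Theta2 \<and> mu \<pi> \<chi> = q \<and> chi1 \<chi> False False \<le> chi2 \<chi> False False}"

end

theory Submission
  imports Defs
begin

lemma sum_bb: "(\<Sum>x\<in>(UNIV::(bool\<times>bool) set). f x) = f (False,False) + f (False,True) + f (True,False) + f (True,True)"
proof -
  have "(UNIV::(bool\<times>bool) set) = {(False,False),(False,True),(True,False),(True,True)}"
    by (auto intro: bool.exhaust)
  show ?thesis unfolding \<open>UNIV = _\<close> by (simp add: add.assoc)
qed

lemma sum_b: "(\<Sum>x\<in>(UNIV::bool set). f x) = f False + f True"
  by (simp add: UNIV_bool)

lemma pd_bb: "p \<in> prob_dens \<longleftrightarrow> (\<forall>x. 0 \<le> p x) \<and>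
   p (False,False) + p (False,True) + p (True,False) + p (True,True) = (1::real)"
  by (simp add: prob_dens_def sum_bb)

lemma pd_b: "p \<in> prob_dens \<longleftrightarrow> (\<forall>x. 0 \<le> p x) \<and> p False + p True = (1::real)"
  by (simp add: prob_dens_def sum_b)

lemma forward:
  assumes "(P, D) \<in> C_le q"
  shows "P \<in> {0..1} \<and> D \<in> {-1..1} \<and>
         q (False, True) - q (True, False) \<le> P * D \<and>
         P * D \<le> min (q (False, True)) (q (False, True) - q (True, False) + 1 - P)"
proof -
  obtain \<pi> \<chi> where PD: "P = \<pi> True" "D = chi2 \<chi> True True - chi1 \<chi> True True"
    and th: "(\<pi>, \<chi>) \<in> Theta2" and m: "mu \<pi> \<chi> = q" and c: "chi1 \<chi> False False \<le> chi2 \<chi> False False"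
    using assms unfolding C_le_def by blast
  have pi: "\<pi> False \<ge> 0" "\<pi> True \<ge> 0" "\<pi> False + \<pi> True = 1"
    using th by (auto simp: Theta2_def pd_b)
  have ch: "\<And>i j. \<chi> i j \<ge> 0" "\<And>i. \<chi> i (False,False) + \<chi> i (False,True) + \<chi> i (True,False) + \<chi> i (True,True) = 1"
    using th by (auto simp: Theta2_def markov_def pd_bb)
  have q: "\<And>j. q j = \<pi> False * \<chi> False j + \<pi> True * \<chi> True j"
    using m by (auto simp: mu_def sum_b)
  have D: "D = \<chi> True (False,True) - \<chi> True (True,False)"
    using PD by (simp add: chi1_def chi2_def)
  have c': "\<chi> False (False,True) \<le> \<chi> False (True,False)" using c by (simp add: chi1_def chi2_def)
  have PDe: "P * D = \<pi> True * \<chi> True (False,True) - \<pi> True * \<chi> True (True,False)"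
    unfolding PD(1) D by (simp add: right_diff_distrib)
  have n1: "0 \<le> \<pi> False * \<chi> False (False,True)" "0 \<le> \<pi> True * \<chi> True (True,False)"
    using pi ch by auto
  have n2: "\<pi> False * \<chi> False (False,True) \<le> \<pi> False * \<chi> False (True,False)"
    using pi c' by (simp add: mult_left_mono)
  have n3: "\<pi> False * \<chi> False (True,False) \<le> \<pi> False"
  proof -
    have "\<chi> False (True,False) \<le> 1" using ch[of False] ch(1)[of False "(False,False)"]
      ch(1)[of False "(False,True)"] ch(1)[of False "(True,True)"] by linarith
    then show ?thesis using pi mult_left_mono[of _ 1 "\<pi> False"] by simp
  qed
  have "0 \<le> \<chi> True (True,False)" "0 \<le> \<chi> True (False,True)"
    "\<chi> True (True,False) + \<chi> True (False,True) \<le> 1"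
    using ch(2)[of True] ch(1)[of True "(False,False)"] ch(1)[of True "(True,True)"]
      ch(1)[of True "(True,False)"] ch(1)[of True "(False,True)"] by linarith+
  then have "D \<in> {-1..1}" using D by auto
  moreover have "P \<in> {0..1}" using pi PD by auto
  ultimately show ?thesis using q[of "(False,True)"] q[of "(True,False)"] PDe n1 n2 n3 pi PD(1) by auto
qed

lemma backward:
  assumes q: "q \<in> prob_dens"
    and P: "P \<in> {0..1}" and D: "D \<in> {-1..(1::real)}"
    and l: "q (False, True) - q (True, False) \<le> P * D"
    and u: "P * D \<le> min (q (False, True)) (q (False, True) - q (True, False) + 1 - P)"
  shows "(P, D) \<in> C_le q"
proof -
  define q00 q01 q10 q11 where "q00 = q (False,False)" "q01 = q (False,True)"
    "q10 = q (True,False)" "q11 = q (True,True)"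
  have qn: "q00 \<ge> 0" "q01 \<ge> 0" "q10 \<ge> 0" "q11 \<ge> 0" "q00 + q01 + q10 + q11 = 1"
    using q unfolding q00_q01_q10_q11_def pd_bb by auto
  define m where "m = P * D"
  have mb: "\<bar>m\<bar> \<le> P"
  proof -
    have "\<bar>m\<bar> = P * \<bar>D\<bar>" using P by (simp add: m_def abs_mult)
    also have "\<dots> \<le> P * 1" using P D by (intro mult_left_mono) auto
    finally show ?thesis by simp
  qed
  have l': "q01 - q10 \<le> m" and u1: "m \<le> q01" and u2: "m \<le> q01 - q10 + 1 - P"
    using l u unfolding m_def q00_q01_q10_q11_def by auto
  define cp dp where "cp = max m 0" "dp = max (-m) 0"
  define t where "t = max 0 ((q01 + q10 + P - 1 - (cp + dp)) / 2)"
  define c d where "c = cp + t" "d = dp + t"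
  define a b where "a = q01 - c" "b = q10 - d"
  define R0 R1 where "R0 = 1 - P - a - b" "R1 = P - c - d"
  define e where "e = min q00 R0"
  define f g h where "f = R0 - e" "g = q00 - e" "h = q11 - f"
  have P01: "0 \<le> P" "P \<le> 1" using P by auto
  have cpd: "cp \<ge> 0" "dp \<ge> 0" "cp - dp = m" "cp + dp = \<bar>m\<bar>"
    "cp \<le> q01" "dp \<le> q10"
    using l' u1 qn unfolding cp_dp_def by (auto simp: max_def)
  have mb': "cp + dp \<le> P" using cpd(4) mb by simp
  have tt: "t \<ge> 0" "2 * t \<ge> q01 + q10 + P - 1 - (cp + dp)"
    "t = 0 \<or> 2 * t = q01 + q10 + P - 1 - (cp + dp)"
    unfolding t_def by (auto simp: max_def)
  have ee: "e \<le> q00" "e \<le> R0" "e = q00 \<or> e = R0" unfolding e_def by auto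
  have tz: "t \<noteq> 0 \<Longrightarrow> 2 * t = q01 + q10 + P - 1 - (cp + dp)" using tt(3) by blast
  have ez: "e \<noteq> q00 \<Longrightarrow> e = R0" using ee(3) by blast
  have abcd: "a = q01 - cp - t" "b = q10 - dp - t" "c = cp + t" "d = dp + t"
    unfolding a_b_def c_d_def by auto
  have rr: "R0 = 1 - P - a - b" "R1 = P - c - d" "f = R0 - e" "g = q00 - e" "h = q11 - f"
    unfolding R0_R1_def f_g_h_def by auto
  have AB: "0 \<le> a \<and> 0 \<le> b \<and> a \<le> b \<and> 0 \<le> c \<and> 0 \<le> d \<and> c - d = m \<and> c + d \<le> P \<and> a + b \<le> 1 - P"
  proof (cases "t = 0")
    case True
    then show ?thesis using qn mb' l' u1 u2 P01 cpd(1,2,3,5,6) tt(1,2) abcd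
      by (smt (verit))
  next
    case False
    then have "2 * t = q01 + q10 + P - 1 - (cp + dp)" by (rule tz)
    then show ?thesis using qn mb' l' u1 u2 P01 cpd(1,2,3,5,6) tt(1,2) abcd
      by (smt (verit))
  qed
  have C: "0 \<le> e \<and> 0 \<le> f \<and> 0 \<le> g \<and> 0 \<le> h"
  proof (cases "e = q00")
    case True
    then show ?thesis using qn AB abcd rr ee(1,2) by (smt (verit))
  next
    case False
    then have "e = R0" by (rule ez)
    then show ?thesis using qn AB abcd rr ee(1,2) by (smt (verit))
  qed
  have nn: "0 \<le> a" "0 \<le> b" "0 \<le> c" "0 \<le> d" "0 \<le> e" "0 \<le> f" "0 \<le> g" "0 \<le> h" "a \<le> b"
    and s0: "a + b + e + f = 1 - P" and s1: "c + d + g + h = P" and cdm: "c - d = m"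
    using AB C rr qn abcd unfolding q00_q01_q10_q11_def by auto
  define x where "x = (\<lambda>i j. if i then (if j = (False,False) then g else if j = (False,True) then c
       else if j = (True,False) then d else h)
     else (if j = (False,False) then e else if j = (False,True) then a
       else if j = (True,False) then b else f))"
  define \<pi> where "\<pi> = (\<lambda>i. if i then P else 1 - P)"
  define df where "df = (\<lambda>i (j::bool\<times>bool). if i then (if j = (False,False) then 1 - \<bar>D\<bar>
       else if j = (False,True) then max D 0 else if j = (True,False) then max (-D) 0 else 0)
     else (if j = (False,False) then 1 else (0::real)))"
  define \<chi> where "\<chi> = (\<lambda>i j. if \<pi> i = 0 then df i j else x i j / \<pi> i)"
  have xn: "\<And>i j. 0 \<le> x i j" unfolding x_def using nn(1-8) by simp
  have xs: "\<And>i. x i (False,False) + x i (False,True) + x i (True,False) + x i (True,True) = \<pi> i"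
    using s0 s1 unfolding x_def \<pi>_def by auto
  have pin: "\<And>i. 0 \<le> \<pi> i" using P01 unfolding \<pi>_def by auto
  have x0: "\<And>i j. \<pi> i = 0 \<Longrightarrow> x i j = 0"
  proof -
    fix i and j :: "bool \<times> bool" assume "\<pi> i = 0"
    then have "x i (False,False) + x i (False,True) + x i (True,False) + x i (True,True) = 0" using xs by simp
    then have "x i (False,False) = 0 \<and> x i (False,True) = 0 \<and> x i (True,False) = 0 \<and> x i (True,True) = 0"
      using xn[of i "(False,False)"] xn[of i "(False,True)"] xn[of i "(True,False)"] xn[of i "(True,True)"] by linarith
    moreover obtain a b where j: "j = (a,b)" by fastforce
    ultimately show "x i j = 0" by (cases a; cases b) auto
  qed
  have px: "\<And>i j. \<pi> i * \<chi> i j = x i j"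
    using x0 unfolding \<chi>_def by auto
  have Dabs: "\<bar>D\<bar> \<le> 1" using D by auto
  have chn: "\<And>i j. 0 \<le> \<chi> i j"
    using xn pin Dabs unfolding \<chi>_def df_def by auto
  have chs: "\<And>i. \<chi> i (False,False) + \<chi> i (False,True) + \<chi> i (True,False) + \<chi> i (True,True) = 1"
  proof -
    fix i
    show "\<chi> i (False,False) + \<chi> i (False,True) + \<chi> i (True,False) + \<chi> i (True,True) = 1"
    proof (cases "\<pi> i = 0")
      case True then show ?thesis unfolding \<chi>_def df_def by (auto simp: max_def abs_if)
    next
      case False
      have "\<chi> i (False,False) + \<chi> i (False,True) + \<chi> i (True,False) + \<chi> i (True,True)
         = (x i (False,False) + x i (False,True) + x i (True,False) + x i (True,True)) / \<pi> i"
        using False unfolding \<chi>_def by (simp add: add_divide_distrib)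
      then show ?thesis using xs False by simp
    qed
  qed
  have th: "(\<pi>, \<chi>) \<in> Theta2"
    unfolding Theta2_def markov_def using chn chs pin P01
    by (auto simp: pd_bb pd_b \<pi>_def)
  have mu: "mu \<pi> \<chi> = q"
  proof
    fix j :: "bool \<times> bool"
    have "mu \<pi> \<chi> j = x False j + x True j" by (simp add: mu_def sum_b px)
    also have "\<dots> = q j"
      using s0 s1 unfolding x_def a_b_def f_g_h_def R0_R1_def q00_q01_q10_q11_def
      by (cases j) auto
    finally show "mu \<pi> \<chi> j = q j" .
  qed
  have cF: "chi1 \<chi> False False \<le> chi2 \<chi> False False"
  proof -
    have "\<chi> False (False,True) \<le> \<chi> False (True,False)"
    proof (cases "\<pi> False = 0")
      case True then show ?thesis unfolding \<chi>_def df_def by simp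
    next
      case False
      then have "\<pi> False > 0" using pin[of False] by simp
      then show ?thesis using nn(9) unfolding \<chi>_def x_def using False by (simp add: divide_right_mono)
    qed
    then show ?thesis by (simp add: chi1_def chi2_def)
  qed
  have dT: "chi2 \<chi> True True - chi1 \<chi> True True = D"
  proof -
    have "\<chi> True (False,True) - \<chi> True (True,False) = D"
    proof (cases "\<pi> True = 0")
      case True then show ?thesis unfolding \<chi>_def df_def by (auto simp: max_def)
    next
      case False
      then have "\<chi> True (False,True) - \<chi> True (True,False) = (c - d) / P"
        unfolding \<chi>_def x_def \<pi>_def by (simp add: diff_divide_distrib)
      also have "\<dots> = D" using cdm False unfolding m_def \<pi>_def by simp
      finally show ?thesis .
    qed
    then show ?thesis by (simp add: chi1_def chi2_def)
  qed
  have "P = \<pi> True" by (simp add: \<pi>_def)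
  then show ?thesis unfolding C_le_def using th mu cF dT by fastforce
qed

theorem lemma9:
  fixes q :: "bool \<times> bool \<Rightarrow> real"
  assumes "q \<in> prob_dens"
  shows "C_le q \<noteq> {} \<and>
         C_le q = {(Pr, dSe). Pr \<in> {0..1} \<and> dSe \<in> {-1..1} \<and>
                    q (False, True) - q (True, False) \<le> Pr * dSe \<and>
                    Pr * dSe \<le> min (q (False, True)) (q (False, True) - q (True, False) + 1 - Pr)}"
proof -
  have eq: "C_le q = {(Pr, dSe). Pr \<in> {0..1} \<and> dSe \<in> {-1..1} \<and>
                    q (False, True) - q (True, False) \<le> Pr * dSe \<and>
                    Pr * dSe \<le> min (q (False, True)) (q (False, True) - q (True, False) + 1 - Pr)}"
    apply (rule set_eqI)
    subgoal for z
      by (cases z) (use forward backward[OF assms] in \<open>simp only: mem_Collect_eq prod.case, blast\<close>)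
    done
  have qn: "q (False,False) \<ge> 0" "q (False,True) \<ge> 0" "q (True,False) \<ge> 0" "q (True,True) \<ge> 0"
    "q (False,False) + q (False,True) + q (True,False) + q (True,True) = 1"
    using assms unfolding pd_bb by auto
  have "(1, q (False,True) - q (True,False)) \<in> C_le q"
    unfolding eq using qn by (simp add: min_def)
  then show ?thesis using eq by blast
qed

end
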